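(* Let $2\le i\le n/3$, let $\alpha,\beta$ be conjugacy classes of $S_n$ with $a_j=b_j$ for $j<i$ and $a_i\ne b_i$, and for $0\le k\le i-1$ put $r_k=1-\frac{i(n-i+k+1)}{\binom n2}$. If $t\ge \frac{n^2(\log(i-1)+1)}{i}$, then $\Big|(a_i-b_i)\binom ni\sum_{k=1}^{i-1}(-1)^k\binom{i-1}{k}\frac{n-2i+k+1}{n-i+k+1}r_k^t\Big|\le\frac12\,|a_i-b_i|\binom ni\frac{n-2i+1}{n-i+1}r_0^t.$ That is, the combined contribution of the partitions $[n-i,i-k,1^k]$, $1\le k\le i-1$, to the Fourier expansion of $P^{*t}(\alpha)-P^{*t}(\beta)$ for the random transposition walk is at most half, in absolute value, of the contribution of $[n-i,i]$.
   Context: $\log$ is the natural logarithm. $a_j$ (resp. $b_j$) is the number of $j$-cycles of the class $\alpha$ (resp. $\beta$). The random transposition walk on $S_n$ starts at the identity and at each step multiplies by a uniformly random transposition; $P^{*t}(\alpha)$ is the probability of any fixed element of class $\alpha$ after $t$ steps, and $P^{*t}(\alpha)-P^{*t}(\beta)=\frac1{n!}\sum_\lambda(\chi_\lambda(\alpha)-\chi_\lambda(\beta))d_\lambda\big(\chi_\lambda(\tau)/d_\lambda\big)^t$. *)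

theory Defs
  imports "HOL-Analysis.Analysis" "HOL-Combinatorics.Permutations"
begin

definition perm_orbit :: "(nat \<Rightarrow> nat) \<Rightarrow> nat \<Rightarrow> nat set" where
  "perm_orbit \<sigma> x = {(\<sigma> ^^ m) x | m. True}"

text \<open>Number of j-cycles of a permutation sigma of {1..n} (fixed points are 1-cycles).
  This is a class function, so it is the a_j of the conjugacy class of sigma.\<close>
definition num_cycles :: "nat \<Rightarrow> (nat \<Rightarrow> nat) \<Rightarrow> nat \<Rightarrow> nat" where
  "num_cycles n \<sigma> j = card {C. \<exists>x\<in>{1..n}. C = perm_orbit \<sigma> x \<and> card C = j}"

definition rk :: "nat \<Rightarrow> nat \<Rightarrow> nat \<Rightarrow> real" where
  "rk n i k = 1 - real i * (real n - real i + real k + 1) / real (n choose 2)"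

end

theory Submission
  imports Defs
begin

lemma N_real: "real (n choose 2) = real n * (real n - 1) / 2"
proof -
  have "even (n * (n - 1))" by auto
  then have "real (n * (n - 1) div 2) = real (n * (n - 1)) / 2"
    by (simp add: real_of_nat_div)
  then show ?thesis by (cases n) (auto simp: choose_two algebra_simps)
qed

lemma exp2_ge5: "exp (2::real) \<ge> 5"
proof -
  have h: "3/2 \<le> exp (1/2::real)" using exp_ge_add_one_self[of "1/2::real"] by simp
  have "exp (2::real) = exp (1/2) ^ 4"
    by (simp add: exp_of_nat_mult[symmetric])
  also have "\<dots> \<ge> (3/2) ^ 4" by (rule power_mono[OF h]) simp
  moreover have "(3/2::real) ^ 4 = 81/16" by (simp add: eval_nat_numeral)
  ultimately show ?thesis by linarith
qed

lemma geom5: "4 * (\<Sum>k=1..m. (1/5::real) ^ k) = 1 - (1/5) ^ m"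
  by (induction m) (simp_all add: algebra_simps)

lemma term_bound:
  fixes n i t k :: nat
  assumes i2: "2 \<le> i" and ni: "3 * i \<le> n" and k1: "1 \<le> k" and ki: "k \<le> i - 1"
    and tt: "real t \<ge> real n ^ 2 * (ln (real i - 1) + 1) / real i"
  shows "real ((i - 1) choose k) *
               ((real n - 2 * real i + real k + 1) / (real n - real i + real k + 1)) * rk n i k ^ t
         \<le> rk n i 0 ^ t * (exp (-2)) ^ k"
proof -
  define N where "N = real (n choose 2)"
  define L where "L = ln (real i - 1) + 1"
  have Nv: "N = real n * (real n - 1) / 2" using N_real N_def by simp
  have n6: "real n \<ge> 6" using ni i2 by linarith
  have Npos: "N > 0" unfolding Nv using n6 by (intro divide_pos_pos mult_pos_pos) auto
  have kk: "real k \<le> real i - 1" using ki i2 by linarith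
  have k1r: "real k \<ge> 1" using k1 by simp
  have iN: "real i * real n \<le> N"
  proof -
    have "2 * real i \<le> real n - 1" using ni i2 by linarith
    then have "real n * (2 * real i) \<le> real n * (real n - 1)" using n6 by (intro mult_left_mono) auto
    then show ?thesis using Nv by (simp add: algebra_simps)
  qed
  define r0 where "r0 = rk n i 0"
  have rkv: "rk n i k = r0 - real i * real k / N"
    unfolding r0_def rk_def N_def[symmetric] using Npos by (simp add: field_simps)
  have rk_nn: "rk n i k \<ge> 0"
  proof -
    have "real i * (real n - real i + real k + 1) \<le> real i * real n"
      using kk by (intro mult_left_mono) auto
    then have "real i * (real n - real i + real k + 1) / N \<le> 1" using iN Npos by simp
    then show ?thesis unfolding rk_def N_def[symmetric] by simp
  qed
  have r0le: "r0 \<le> 1"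
  proof -
    have "real n - real i + 1 \<ge> 0" using ni by linarith
    then have "real i * (real n - real i + 1) / N \<ge> 0" using Npos by simp
    then show ?thesis unfolding r0_def rk_def N_def[symmetric] by simp
  qed
  have ikN_nn: "real i * real k / N \<ge> 0" using Npos by simp
  have ikN_le: "real i * real k / N \<le> 1"
  proof -
    have "real i * real k \<le> real i * real n" using kk n6 i2 ni by (intro mult_left_mono) auto
    then show ?thesis using iN Npos by simp
  qed
  have r0nn: "r0 \<ge> 0" using rk_nn rkv ikN_nn by linarith
  have s1: "rk n i k \<le> r0 * (1 - real i * real k / N)"
    using rkv r0le ikN_nn mult_left_mono[OF r0le ikN_nn] by (simp add: algebra_simps)
  have s2: "rk n i k ^ t \<le> (r0 * (1 - real i * real k / N)) ^ t"
    by (rule power_mono[OF s1 rk_nn])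
  have s3: "(1 - real i * real k / N) ^ t \<le> exp (- (real i * real k / N)) ^ t"
    by (rule power_mono) (use ikN_le exp_ge_add_one_self[of "- (real i * real k / N)"] in auto)
  have s4: "exp (- (real i * real k / N)) ^ t = exp (- (real i * real k * real t / N))"
    by (simp add: exp_of_nat_mult[symmetric] algebra_simps)
  have Lnn: "L \<ge> 1" unfolding L_def using i2 by simp
  have it: "real i * real t \<ge> real n ^ 2 * L"
    using tt i2 unfolding L_def by (simp add: field_simps)
  have n2N: "real n ^ 2 \<ge> 2 * N" using Nv by (simp add: power2_eq_square algebra_simps)
  have "real i * real t \<ge> 2 * N * L"
    using it mult_right_mono[OF n2N, of L] Lnn by linarith
  then have "real i * real t / N \<ge> 2 * L" using Npos by (simp add: field_simps)
  then have "real k * (real i * real t / N) \<ge> real k * (2 * L)"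
    using k1r by (intro mult_left_mono) auto
  then have s5: "exp (- (real i * real k * real t / N)) \<le> exp (-2 * L) ^ k"
    by (simp add: exp_of_nat_mult[symmetric] algebra_simps)
  have im1: "real i - 1 \<ge> 1" using i2 by simp
  have eL: "exp (-2 * L) = exp (-2) / (real i - 1) ^ 2"
  proof -
    have "exp (-2 * L) = exp (-2) * exp (- 2 * ln (real i - 1))"
      unfolding L_def by (simp add: exp_add[symmetric] algebra_simps)
    also have "exp (- 2 * ln (real i - 1)) = 1 / exp (ln (real i - 1)) ^ 2"
      by (simp add: exp_minus exp_of_nat_mult[symmetric] power2_eq_square inverse_eq_divide
          exp_add[symmetric])
    also have "exp (ln (real i - 1)) = real i - 1" using im1 by simp
    finally show ?thesis by simp
  qed
  have cb: "real ((i - 1) choose k) \<le> (real i - 1) ^ k"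
  proof -
    have "(i - 1) choose k \<le> (i - 1) ^ k" by (rule binomial_le_pow[OF ki])
    then have "real ((i - 1) choose k) \<le> real ((i - 1) ^ k)" by linarith
    then show ?thesis using i2 by (simp add: of_nat_diff)
  qed
  have q: "(real i - 1) * exp (-2 * L) \<le> exp (-2)"
  proof -
    have ne: "real i - 1 \<noteq> 0" using im1 by simp
    have gen: "\<And>x e::real. x \<noteq> 0 \<Longrightarrow> x * (e / x ^ 2) = e / x"
      by (simp add: power2_eq_square)
    have "(real i - 1) * exp (-2 * L) = exp (-2) / (real i - 1)"
      unfolding eL by (rule gen[OF ne])
    also have "\<dots> \<le> exp (-2)" using im1 by (simp add: divide_le_eq)
    finally show ?thesis .
  qed
  have fk: "(real n - 2 * real i + real k + 1) / (real n - real i + real k + 1) \<le> 1"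
    "0 \<le> (real n - 2 * real i + real k + 1) / (real n - real i + real k + 1)"
    using ni i2 by (auto simp: divide_le_eq)
  have A: "rk n i k ^ t \<le> r0 ^ t * exp (-2 * L) ^ k"
  proof -
    have "rk n i k ^ t \<le> r0 ^ t * (1 - real i * real k / N) ^ t"
      using s2 by (simp add: power_mult_distrib)
    also have "\<dots> \<le> r0 ^ t * exp (- (real i * real k / N)) ^ t"
      by (rule mult_left_mono[OF s3]) (use r0nn in simp)
    also have "\<dots> \<le> r0 ^ t * exp (-2 * L) ^ k"
      using s4 s5 by (intro mult_left_mono) (auto simp: r0nn)
    finally show ?thesis .
  qed
  have "real ((i - 1) choose k) *
               ((real n - 2 * real i + real k + 1) / (real n - real i + real k + 1)) * rk n i k ^ t
        \<le> real ((i - 1) choose k) * 1 * rk n i k ^ t"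
    by (intro mult_right_mono mult_left_mono fk) (auto simp: rk_nn)
  also have "\<dots> \<le> (real i - 1) ^ k * (r0 ^ t * exp (-2 * L) ^ k)"
    using cb A by (intro mult_mono) (auto simp: rk_nn)
  also have "\<dots> = r0 ^ t * ((real i - 1) * exp (-2 * L)) ^ k"
    by (simp add: power_mult_distrib)
  also have "\<dots> \<le> r0 ^ t * exp (-2) ^ k"
    by (intro mult_left_mono power_mono q) (use im1 r0nn in auto)
  finally show ?thesis unfolding r0_def .
qed

lemma rk_nonneg:
  fixes n i k :: nat
  assumes i2: "2 \<le> i" and ni: "3 * i \<le> n" and ki: "k \<le> i - 1"
  shows "rk n i k \<ge> 0"
proof -
  have n6: "real n \<ge> 6" using ni i2 by linarith
  have kk: "real k \<le> real i - 1" using ki i2 by linarith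
  have "real i * (real n - real i + real k + 1) \<le> real n * (real n - 1) / 2"
  proof -
    have "real i * (real n - real i + real k + 1) \<le> real i * real n" using kk by (intro mult_left_mono) auto
    also have "\<dots> \<le> real n * (real n - 1) / 2"
    proof -
      have "2 * real i \<le> real n - 1" using ni i2 by linarith
      then have "real n * (2 * real i) \<le> real n * (real n - 1)" using n6 by (intro mult_left_mono) auto
      then show ?thesis by (simp add: algebra_simps)
    qed
    finally show ?thesis .
  qed
  moreover have "real n * (real n - 1) / 2 > 0" using n6 by simp
  ultimately show ?thesis unfolding rk_def N_real by simp
qed

lemma core:
  fixes n i t :: nat
  assumes i2: "2 \<le> i" and ni: "3 * i \<le> n"
    and tt: "real t \<ge> real n ^ 2 * (ln (real i - 1) + 1) / real i"
  shows "\<bar>\<Sum>k=1..i-1. (-1) ^ k * real ((i - 1) choose k) *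
               ((real n - 2 * real i + real k + 1) / (real n - real i + real k + 1)) * rk n i k ^ t\<bar>
         \<le> 1/2 * ((real n - 2 * real i + 1) / (real n - real i + 1)) * rk n i 0 ^ t"
proof -
  have r0nn: "rk n i 0 \<ge> 0"
  proof -
    have n6: "real n \<ge> 6" using ni i2 by linarith
    have "real i * (real n - real i + 1) \<le> real n * (real n - 1) / 2"
    proof -
      have "real i * (real n - real i + 1) \<le> real i * real n" using i2 by (intro mult_left_mono) auto
      also have "\<dots> \<le> real n * (real n - 1) / 2"
      proof -
        have "2 * real i \<le> real n - 1" using ni i2 by linarith
        then have "real n * (2 * real i) \<le> real n * (real n - 1)" using n6 by (intro mult_left_mono) auto
        then show ?thesis by (simp add: algebra_simps)
      qed
      finally show ?thesis .
    qed
    moreover have "real n * (real n - 1) / 2 > 0" using n6 by simp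
    ultimately show ?thesis unfolding rk_def N_real by simp
  qed
  have e5: "exp (-2::real) \<le> 1/5"
    using exp2_ge5 by (simp add: exp_minus inverse_eq_divide divide_le_eq)
  have "\<bar>\<Sum>k=1..i-1. (-1) ^ k * real ((i - 1) choose k) *
               ((real n - 2 * real i + real k + 1) / (real n - real i + real k + 1)) * rk n i k ^ t\<bar>
      \<le> (\<Sum>k=1..i-1. \<bar>(-1) ^ k * real ((i - 1) choose k) *
               ((real n - 2 * real i + real k + 1) / (real n - real i + real k + 1)) * rk n i k ^ t\<bar>)"
    by (rule sum_abs)
  also have "\<dots> = (\<Sum>k=1..i-1. real ((i - 1) choose k) *
               ((real n - 2 * real i + real k + 1) / (real n - real i + real k + 1)) * rk n i k ^ t)"
  proof (rule sum.cong[OF refl])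
    fix k assume "k \<in> {1..i-1}"
    then have nn: "real ((i - 1) choose k) *
               ((real n - 2 * real i + real k + 1) / (real n - real i + real k + 1)) * rk n i k ^ t \<ge> 0"
      using rk_nonneg[OF i2 ni, of k] ni by (intro mult_nonneg_nonneg) auto
    show "\<bar>(-1) ^ k * real ((i - 1) choose k) *
               ((real n - 2 * real i + real k + 1) / (real n - real i + real k + 1)) * rk n i k ^ t\<bar> =
          real ((i - 1) choose k) *
               ((real n - 2 * real i + real k + 1) / (real n - real i + real k + 1)) * rk n i k ^ t"
    proof -
      let ?X = "real ((i - 1) choose k) *
               ((real n - 2 * real i + real k + 1) / (real n - real i + real k + 1)) * rk n i k ^ t"
      have "(-1) ^ k * real ((i - 1) choose k) *
               ((real n - 2 * real i + real k + 1) / (real n - real i + real k + 1)) * rk n i k ^ t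
            = (-1) ^ k * ?X" by (simp add: mult.assoc)
      then have "\<bar>(-1) ^ k * real ((i - 1) choose k) *
               ((real n - 2 * real i + real k + 1) / (real n - real i + real k + 1)) * rk n i k ^ t\<bar>
            = \<bar>(-1::real) ^ k\<bar> * \<bar>?X\<bar>" by (simp only: abs_mult)
      also have "\<dots> = \<bar>?X\<bar>" by (simp only: power_abs abs_neg_one power_one mult_1_left)
      also have "\<dots> = ?X" by (rule abs_of_nonneg[OF nn])
      finally show ?thesis .
    qed
  qed
  also have "\<dots> \<le> (\<Sum>k=1..i-1. rk n i 0 ^ t * (1/5) ^ k)"
  proof (rule sum_mono)
    fix k assume "k \<in> {1..i-1}"
    then have "real ((i - 1) choose k) *
               ((real n - 2 * real i + real k + 1) / (real n - real i + real k + 1)) * rk n i k ^ t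
         \<le> rk n i 0 ^ t * (exp (-2)) ^ k" by (intro term_bound[OF i2 ni _ _ tt]) auto
    also have "\<dots> \<le> rk n i 0 ^ t * (1/5) ^ k"
      by (intro mult_left_mono power_mono e5) (auto simp: r0nn)
    finally show "real ((i - 1) choose k) *
               ((real n - 2 * real i + real k + 1) / (real n - real i + real k + 1)) * rk n i k ^ t
         \<le> rk n i 0 ^ t * (1/5) ^ k" .
  qed
  also have "\<dots> = rk n i 0 ^ t * (\<Sum>k=1..i-1. (1/5) ^ k)" by (simp add: sum_distrib_left)
  also have "\<dots> \<le> rk n i 0 ^ t * (1/4)"
  proof -
    have z: "(1/5::real)^(i-1) \<ge> 0" by simp
    have "(\<Sum>k=1..i-1. (1/5::real) ^ k) \<le> 1/4" using geom5[of "i-1"] z by linarith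
    then show ?thesis by (intro mult_left_mono) (auto simp: r0nn)
  qed
  also have "\<dots> \<le> 1/2 * ((real n - 2 * real i + 1) / (real n - real i + 1)) * rk n i 0 ^ t"
  proof -
    have "1/2 \<le> (real n - 2 * real i + 1) / (real n - real i + 1)"
      using ni by (simp add: le_divide_eq)
    then have "1/4 \<le> 1/2 * ((real n - 2 * real i + 1) / (real n - real i + 1))" by linarith
    from mult_right_mono[OF this zero_le_power[OF r0nn, of t]]
    show ?thesis by (simp add: mult.commute)
  qed
  finally show ?thesis .
qed

theorem lemma5p7:
  fixes n i t :: nat and \<sigma> \<tau> :: "nat \<Rightarrow> nat"
  assumes "2 \<le> i" and "3 * i \<le> n"
    and "\<sigma> permutes {1..n}" and "\<tau> permutes {1..n}"
    and "\<forall>j. 1 \<le> j \<and> j < i \<longrightarrow> num_cycles n \<sigma> j = num_cycles n \<tau> j"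
    and "num_cycles n \<sigma> i \<noteq> num_cycles n \<tau> i"
    and "real t \<ge> real n ^ 2 * (ln (real i - 1) + 1) / real i"
  shows "\<bar>(real (num_cycles n \<sigma> i) - real (num_cycles n \<tau> i)) * real (n choose i) *
            (\<Sum>k=1..i-1. (-1) ^ k * real ((i - 1) choose k) *
               ((real n - 2 * real i + real k + 1) / (real n - real i + real k + 1)) * rk n i k ^ t)\<bar>
         \<le> 1/2 * \<bar>real (num_cycles n \<sigma> i) - real (num_cycles n \<tau> i)\<bar> * real (n choose i) *
            ((real n - 2 * real i + 1) / (real n - real i + 1)) * rk n i 0 ^ t"
proof -
  define d where "d = \<bar>real (num_cycles n \<sigma> i) - real (num_cycles n \<tau> i)\<bar> * real (n choose i)"
  have dnn: "d \<ge> 0" unfolding d_def by simp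
  have c: "\<bar>\<Sum>k=1..i-1. (-1) ^ k * real ((i - 1) choose k) *
               ((real n - 2 * real i + real k + 1) / (real n - real i + real k + 1)) * rk n i k ^ t\<bar>
         \<le> 1/2 * ((real n - 2 * real i + 1) / (real n - real i + 1)) * rk n i 0 ^ t"
    by (rule core[OF assms(1,2,7)])
  have "d * \<bar>\<Sum>k=1..i-1. (-1) ^ k * real ((i - 1) choose k) *
               ((real n - 2 * real i + real k + 1) / (real n - real i + real k + 1)) * rk n i k ^ t\<bar>
       \<le> d * (1/2 * ((real n - 2 * real i + 1) / (real n - real i + 1)) * rk n i 0 ^ t)"
    by (rule mult_left_mono[OF c dnn])
  then show ?thesis unfolding d_def by (simp add: abs_mult mult_ac)
qed

end
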